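(* Let $A$ be an entire function of finite order $\rho$ whose zero set is $T$. Then for any $\varepsilon>0$ there exists a set $E\subset(0,\infty)$ of zero linear density (i.e. $|E\cap(0,R)|=o(R)$ as $R\to\infty$) such that for every integer $k\ge0$ and every entire function $f$ of the form $f=A\,\mathcal{C}_{a,k}$ there is a constant $C=C(f)$ with $$|f(z)|\le C|z|^{\rho+k+1+\varepsilon}|A(z)|,\qquad |z|\ge1,\ |z|\notin E.$$ In particular, if $A$ is of order $\rho$ and type $\sigma$, then every element of $\mathcal{H}(T,A,\mu)$ is of order at most $\rho$ and of type at most $\sigma$ with respect to this order.
   Context: $T=\{t_n\}\subset\mathbb{C}$ pairwise distinct, $0\notin T$, $|t_n|\to\infty$. For integer $k\ge0$ and complex $a=\{a_n\}$ with $\sum_n|t_n|^{-k-1}|a_n|<\infty$, $\mathcal{C}_{a,k}(z)=z^k\sum_n\frac{a_n}{t_n^k(z-t_n)}$. Cauchy--de Branges space (for $A$ with simple zeros exactly at $T$ and $\mu_n>0$ with $\sum_n\mu_n/(|t_n|^2+1)<\infty$): $\mathcal{H}(T,A,\mu)=\{A(z)\sum_n\frac{a_n\mu_n^{1/2}}{z-t_n}: a\in\ell^2\}$ with norm $\|a\|_{\ell^2}$. *)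

theory Defs
  imports "HOL-Analysis.Analysis"
begin

definition entire_order :: "(complex \<Rightarrow> complex) \<Rightarrow> ereal" where
  "entire_order f = (INF s \<in> {s::real. 0 \<le> s \<and>
      (\<exists>R. \<forall>z. R \<le> norm z \<longrightarrow> norm (f z) \<le> exp (norm z powr s))}. ereal s)"

definition entire_type :: "real \<Rightarrow> (complex \<Rightarrow> complex) \<Rightarrow> ereal" where
  "entire_type \<rho> f = (INF \<tau> \<in> {\<tau>::real. 0 \<le> \<tau> \<and>
      (\<exists>R. \<forall>z. R \<le> norm z \<longrightarrow> norm (f z) \<le> exp (\<tau> * norm z powr \<rho>))}. ereal \<tau>)"

definition cauchy_transform ::
  "(nat \<Rightarrow> complex) \<Rightarrow> (nat \<Rightarrow> complex) \<Rightarrow> nat \<Rightarrow> complex \<Rightarrow> complex" where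
  "cauchy_transform t a k z = z ^ k * (\<Sum>n. a n / (t n ^ k * (z - t n)))"

definition cdb_space ::
  "(nat \<Rightarrow> complex) \<Rightarrow> (complex \<Rightarrow> complex) \<Rightarrow> (nat \<Rightarrow> real) \<Rightarrow> (complex \<Rightarrow> complex) set" where
  "cdb_space t A \<mu> = {g. g holomorphic_on UNIV \<and>
      (\<exists>a::nat \<Rightarrow> complex. summable (\<lambda>n. (norm (a n))\<^sup>2) \<and>
        (\<forall>z. z \<notin> range t \<longrightarrow>
           g z = A z * (\<Sum>n. a n * complex_of_real (sqrt (\<mu> n)) / (z - t n))))}"

end

theory Submission
  imports Defs "HOL-Complex_Analysis.Complex_Analysis"
begin

lemma order_nonneg:
  assumes "entire_order A = ereal \<rho>" shows "0 \<le> \<rho>"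
proof -
  have "ereal 0 \<le> entire_order A" unfolding entire_order_def
    by (rule INF_greatest) auto
  thus ?thesis using assms by simp
qed

lemma order_bound:
  assumes "entire_order A = ereal \<rho>" "\<rho> < s"
  shows "\<exists>R\<ge>1. \<forall>z. R \<le> norm z \<longrightarrow> norm (A z) \<le> exp (norm z powr s)"
proof -
  have "entire_order A < ereal s" using assms by simp
  then obtain s' R where s': "0 \<le> s'" "s' < s" and R: "\<forall>z. R \<le> norm z \<longrightarrow> norm (A z) \<le> exp (norm z powr s')"
    unfolding entire_order_def INF_less_iff by auto
  show ?thesis
  proof (intro exI[of _ "max R 1"] conjI allI impI)
    fix z :: complex assume z: "max R 1 \<le> norm z"
    have "norm (A z) \<le> exp (norm z powr s')" using R z by auto
    also have "\<dots> \<le> exp (norm z powr s)" using z s' by (auto intro!: powr_mono)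
    finally show "norm (A z) \<le> exp (norm z powr s)" .
  qed auto
qed

lemma divide_zeros:
  fixes A :: "complex \<Rightarrow> complex"
  assumes "A holomorphic_on UNIV" "finite Z" "\<And>w. w \<in> Z \<Longrightarrow> A w = 0"
  shows "\<exists>h. h holomorphic_on UNIV \<and> (\<forall>z. z \<notin> Z \<longrightarrow> h z * (\<Prod>w\<in>Z. (z - w)) = A z)"
  using assms(2,3)
proof (induction Z rule: finite_induct)
  case empty thus ?case using assms(1) by (intro exI[of _ A]) auto
next
  case (insert a Z)
  then obtain h where h: "h holomorphic_on UNIV" "\<forall>z. z \<notin> Z \<longrightarrow> h z * (\<Prod>w\<in>Z. (z - w)) = A z"
    by auto
  have "h a * (\<Prod>w\<in>Z. (a - w)) = 0" using h(2) insert by auto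
  moreover have "(\<Prod>w\<in>Z. (a - w)) \<noteq> 0" using insert by auto
  ultimately have ha: "h a = 0" by simp
  define h' where "h' = (\<lambda>z. if z = a then deriv h a else (h z - h a) / (z - a))"
  have "h' holomorphic_on UNIV" unfolding h'_def by (rule pole_lemma[OF h(1)]) auto
  moreover have "h' z * (\<Prod>w\<in>insert a Z. (z - w)) = A z" if "z \<notin> insert a Z" for z
    using that h(2) insert ha by (simp add: h'_def)
  ultimately show ?case by blast
qed

lemma zero_count:
  fixes A :: "complex \<Rightarrow> complex"
  assumes hol: "A holomorphic_on UNIV" and fin: "finite Z" and zer: "\<And>w. w \<in> Z \<Longrightarrow> A w = 0"
    and A0: "A 0 \<noteq> 0" and R: "R > 0" and Zs: "\<And>w. w \<in> Z \<Longrightarrow> norm w \<le> R / 4"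
    and M: "\<And>z. norm z = R \<Longrightarrow> norm (A z) \<le> M"
  shows "norm (A 0) * 2 ^ card Z \<le> M"
proof -
  obtain h where h: "h holomorphic_on UNIV" "\<forall>z. z \<notin> Z \<longrightarrow> h z * (\<Prod>w\<in>Z. (z - w)) = A z"
    using divide_zeros[OF hol fin zer] by blast
  have "0 \<notin> Z" using A0 zer by auto
  have hb: "norm (h z) \<le> M / (3*R/4) ^ card Z" if z: "norm z = R" for z
  proof -
    have zZ: "z \<notin> Z" using Zs z R by fastforce
    have lb: "(3*R/4) ^ card Z \<le> (\<Prod>w\<in>Z. norm (z - w))"
    proof -
      have "(\<Prod>w\<in>Z. 3*R/4) \<le> (\<Prod>w\<in>Z. norm (z - w))"
      proof (rule prod_mono)
        fix w assume "w \<in> Z"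
        hence "norm w \<le> R/4" by (rule Zs)
        moreover have "norm z - norm w \<le> norm (z - w)" by (rule norm_triangle_ineq2)
        ultimately show "0 \<le> 3*R/4 \<and> 3*R/4 \<le> norm (z - w)" using z R by auto
      qed
      thus ?thesis by simp
    qed
    have pos: "0 < (3*R/4) ^ card Z" using R by simp
    have "norm (h z) * (\<Prod>w\<in>Z. norm (z - w)) = norm (A z)"
      using arg_cong[OF h(2)[rule_format, OF zZ], of norm] by (simp add: norm_mult prod_norm)
    hence "norm (h z) * (3*R/4) ^ card Z \<le> M"
      using M[OF z] lb by (smt (verit) mult_left_mono norm_ge_zero)
    thus ?thesis using pos by (simp add: field_simps)
  qed
  have "norm (h 0) \<le> M / (3*R/4) ^ card Z"
  proof (rule maximum_modulus_frontier[of h "cball 0 R"])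
    show "h holomorphic_on interior (cball 0 R)" using h(1) by (rule holomorphic_on_subset) auto
    show "continuous_on (closure (cball 0 R)) h" using h(1) holomorphic_on_imp_continuous_on
      by (metis continuous_on_subset top_greatest)
  qed (use R hb in auto)
  moreover have "norm (h 0) * (\<Prod>w\<in>Z. norm w) = norm (A 0)"
  proof -
    have "norm (h 0) * (\<Prod>w\<in>Z. norm (0 - w)) = norm (A 0)"
      using arg_cong[OF h(2)[rule_format, OF \<open>0 \<notin> Z\<close>], of norm] by (simp only: norm_mult prod_norm)
    thus ?thesis by simp
  qed
  moreover have "(\<Prod>w\<in>Z. norm w) \<le> (R/4) ^ card Z"
    using prod_mono[of Z norm "\<lambda>_. R/4"] Zs by simp
  ultimately have "norm (A 0) \<le> M / (3*R/4) ^ card Z * (R/4) ^ card Z"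
    by (smt (verit) mult_mono norm_ge_zero prod_nonneg)
  also have "\<dots> = M / 3 ^ card Z"
    using R by (simp add: power_divide field_simps power_mult_distrib)
  finally have "norm (A 0) * 3 ^ card Z \<le> M" by (simp add: field_simps)
  moreover have "norm (A 0) * 2 ^ card Z \<le> norm (A 0) * 3 ^ card Z"
    by (intro mult_left_mono power_mono) auto
  ultimately show ?thesis by linarith
qed


lemma finite_small:
  assumes "filterlim (\<lambda>n. norm (t n)) at_top sequentially"
  shows "finite {n. norm (t n) \<le> r}"
proof -
  have "eventually (\<lambda>n. r + 1 \<le> norm (t n)) sequentially"
    using assms by (simp add: filterlim_at_top)
  then obtain N where "\<And>n. n \<ge> N \<Longrightarrow> r + 1 \<le> norm (t n)" by (auto simp: eventually_sequentially)
  hence "{n. norm (t n) \<le> r} \<subseteq> {..<N}" by (force simp: not_less[symmetric])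
  thus ?thesis by (rule finite_subset) auto
qed

lemma count_bound:
  fixes t :: "nat \<Rightarrow> complex" and A :: "complex \<Rightarrow> complex"
  assumes t_inj: "inj t"
    and t_nz: "\<And>n. t n \<noteq> 0"
    and t_inf: "filterlim (\<lambda>n. norm (t n)) at_top sequentially"
    and A_entire: "A holomorphic_on UNIV"
    and A_order: "entire_order A = ereal \<rho>"
    and A_zeros: "{z. A z = 0} = range t"
    and s: "\<rho> < s"
  shows "\<exists>K. \<forall>r\<ge>1. real (card {n. norm (t n) \<le> r}) \<le> K * r powr s"
proof -
  have "0 \<le> \<rho>" by (rule order_nonneg[OF A_order])
  hence s0: "0 < s" using s by simp
  obtain R0 where R0: "R0 \<ge> 1" "\<forall>z. R0 \<le> norm z \<longrightarrow> norm (A z) \<le> exp (norm z powr s)"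
    using order_bound[OF A_order s] by blast
  have A0: "A 0 \<noteq> 0" using A_zeros t_nz by (metis (mono_tags, lifting) mem_Collect_eq rangeE)
  define N where "N = (\<lambda>r. card {n. norm (t n) \<le> r})"
  define K0 where "K0 = (4 powr s + \<bar>ln (norm (A 0))\<bar>) / ln 2"
  have mono: "N r \<le> N r'" if "r \<le> r'" for r r'
    unfolding N_def using that by (intro card_mono[OF finite_small[OF t_inf]]) auto
  have big: "real (N r) \<le> K0 * r powr s" if r: "r \<ge> R0" for r
  proof -
    let ?Z = "t ` {n. norm (t n) \<le> r}"
    have cardZ: "card ?Z = N r" unfolding N_def
      by (rule card_image) (use t_inj in \<open>auto simp: inj_on_def inj_def\<close>)
    have "norm (A 0) * 2 ^ card ?Z \<le> exp ((4*r) powr s)"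
    proof (rule zero_count[OF A_entire _ _ A0])
      show "finite ?Z" using finite_small[OF t_inf] by blast
      show "\<And>w. w \<in> ?Z \<Longrightarrow> A w = 0" using A_zeros by auto
      show "0 < 4*r" using r R0 by simp
      show "\<And>w. w \<in> ?Z \<Longrightarrow> norm w \<le> 4*r/4" by auto
      fix z :: complex assume "norm z = 4*r"
      moreover have "R0 \<le> 4*r" using R0 r by simp
      ultimately show "norm (A z) \<le> exp ((4*r) powr s)"
        using R0(2) by metis
    qed
    moreover have "0 < norm (A 0) * 2 ^ N r" using A0 by simp
    ultimately have "ln (norm (A 0) * 2 ^ N r) \<le> (4*r) powr s"
      using cardZ by (metis ln_le_cancel_iff exp_gt_zero ln_exp)
    hence "ln (norm (A 0)) + N r * ln 2 \<le> 4 powr s * r powr s"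
      using A0 r R0 by (simp add: ln_mult ln_realpow powr_mult)
    moreover have "r powr s \<ge> 1" using r R0 s0 by (simp add: ge_one_powr_ge_zero)
    ultimately have "N r * ln 2 \<le> (4 powr s + \<bar>ln (norm (A 0))\<bar>) * r powr s"
    proof -
      have "\<bar>ln (norm (A 0))\<bar> * 1 \<le> \<bar>ln (norm (A 0))\<bar> * r powr s"
        using \<open>r powr s \<ge> 1\<close> by (intro mult_left_mono) auto
      thus ?thesis using \<open>ln (norm (A 0)) + N r * ln 2 \<le> 4 powr s * r powr s\<close>
        by (simp add: distrib_right)
    qed
    thus ?thesis unfolding K0_def by (simp add: field_simps)
  qed
  have K00: "K0 \<ge> 0" unfolding K0_def by simp
  show ?thesis
  proof (intro exI[of _ "K0 * R0 powr s"] allI impI)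
    fix r :: real assume r: "1 \<le> r"
    have R0s: "R0 powr s \<ge> 1" "r powr s \<ge> 1" using R0 r s0 by (auto simp: ge_one_powr_ge_zero)
    show "real (card {n. norm (t n) \<le> r}) \<le> K0 * R0 powr s * r powr s"
    proof (cases "r \<ge> R0")
      case True
      have "real (N r) \<le> K0 * r powr s" by (rule big[OF True])
      also have "\<dots> \<le> K0 * R0 powr s * r powr s" using R0s K00
        by (simp add: mult_right_mono mult_le_cancel_left1)
      finally show ?thesis unfolding N_def .
    next
      case False
      have "real (N r) \<le> real (N R0)" using mono False by simp
      also have "\<dots> \<le> K0 * R0 powr s" by (rule big) simp
      also have "\<dots> \<le> K0 * R0 powr s * r powr s" using R0s K00
        using mult_left_mono[of 1 "r powr s" "K0 * R0 powr s"] by simp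
      finally show ?thesis unfolding N_def .
    qed
  qed
qed


lemma summable_from_count:
  fixes t :: "nat \<Rightarrow> complex"
  assumes t_inf: "filterlim (\<lambda>n. norm (t n)) at_top sequentially"
    and K: "\<forall>r\<ge>1. real (card {n. norm (t n) \<le> r}) \<le> K * r powr s"
    and s: "0 < s" "s < p"
  shows "summable (\<lambda>n. norm (t n) powr (-p))"
proof -
  define f where "f = (\<lambda>n. norm (t n) powr (-p))"
  define F where "F = (\<lambda>J::nat. {n. norm (t n) < 2 ^ J})"
  define q where "q = (2::real) powr (s - p)"
  have q: "0 < q" "q < 1" unfolding q_def using s powr_less_mono[of "s-p" 0 2] by auto
  have finF: "finite (F J)" for J
    unfolding F_def by (rule finite_subset[OF _ finite_small[OF t_inf, of "2^J"]]) auto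
  have f0: "0 \<le> f n" for n unfolding f_def by simp
  have step: "sum f (F (Suc J) - F J) \<le> K * 2 powr s * q ^ J" for J
  proof -
    have "sum f (F (Suc J) - F J) \<le> sum (\<lambda>_. (2 ^ J) powr (-p)) (F (Suc J) - F J)"
    proof (rule sum_mono)
      fix n assume "n \<in> F (Suc J) - F J"
      hence "2 ^ J \<le> norm (t n)" unfolding F_def by auto
      thus "f n \<le> (2 ^ J) powr (-p)" unfolding f_def using s
        by (intro powr_mono2') auto
    qed
    also have "\<dots> = card (F (Suc J) - F J) * (2 ^ J) powr (-p)" by simp
    also have "\<dots> \<le> card {n. norm (t n) \<le> 2 ^ Suc J} * (2 ^ J) powr (-p)"
    proof -
      have "card (F (Suc J) - F J) \<le> card {n. norm (t n) \<le> 2 ^ Suc J}"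
        by (rule card_mono[OF finite_small[OF t_inf]]) (auto simp: F_def)
      thus ?thesis by (intro mult_right_mono) auto
    qed
    also have "\<dots> \<le> K * (2 ^ Suc J) powr s * (2 ^ J) powr (-p)"
    proof (intro mult_right_mono)
      have "(1::real) \<le> 2 ^ Suc J" by (rule one_le_power) simp
      thus "real (card {n. norm (t n) \<le> 2 ^ Suc J}) \<le> K * (2 ^ Suc J) powr s"
        using K by blast
    qed auto
    also have "(2::real) ^ Suc J = 2 powr (real J + 1)" by (simp add: powr_realpow[symmetric] powr_add)
    also have "(2::real) ^ J = 2 powr (real J)" by (simp add: powr_realpow)
    also have "K * (2 powr (real J + 1)) powr s * (2 powr (real J)) powr (-p)
        = K * 2 powr s * 2 powr ((s - p) * real J)"
      by (simp add: powr_powr powr_add[symmetric] algebra_simps)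
    also have "2 powr ((s - p) * real J) = q ^ J"
      unfolding q_def by (simp add: powr_powr[symmetric] powr_realpow)
    finally show ?thesis .
  qed
  have bound: "sum f (F J) \<le> sum f (F 0) + K * 2 powr s / (1 - q)" for J
  proof -
    have "sum f (F J) \<le> sum f (F 0) + (\<Sum>j<J. K * 2 powr s * q ^ j)"
    proof (induction J)
      case 0 thus ?case by simp
    next
      case (Suc J)
      have sub: "F J \<subseteq> F (Suc J)" unfolding F_def by (auto simp: less_le_trans)
      have "sum f (F (Suc J)) = sum f (F J) + sum f (F (Suc J) - F J)"
        using sum.subset_diff[OF sub finF, of f] by simp
      thus ?case using Suc step[of J] by simp
    qed
    also have "(\<Sum>j<J. K * 2 powr s * q ^ j) = K * 2 powr s * (\<Sum>j<J. q ^ j)"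
      by (simp add: sum_distrib_left)
    also have "\<dots> \<le> K * 2 powr s / (1 - q)"
    proof -
      have K0: "0 \<le> K"
      proof -
        have "real (card {n. norm (t n) \<le> 1}) \<le> K * 1 powr s" using K by auto
        thus ?thesis by simp
      qed
      have "(\<Sum>j<J. q ^ j) = (1 - q ^ J) / (1 - q)" using q by (simp add: sum_gp_strict)
      also have "\<dots> \<le> 1 / (1 - q)" using q by (intro divide_right_mono) auto
      finally have "(\<Sum>j<J. q ^ j) \<le> 1 / (1 - q)" .
      hence "K * 2 powr s * (\<Sum>j<J. q ^ j) \<le> K * 2 powr s * (1 / (1 - q))"
        using K0 by (intro mult_left_mono) auto
      thus ?thesis by simp
    qed
    finally show ?thesis by simp
  qed
  show ?thesis unfolding f_def[symmetric]
  proof (rule summableI_nonneg_bounded[OF f0])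
    fix N
    obtain J where J: "(\<Sum>i<N. norm (t i)) < 2 ^ J" using real_arch_pow[of 2] by auto
    have "{..<N} \<subseteq> F J"
    proof
      fix n assume n: "n \<in> {..<N}"
      have "norm (t n) \<le> (\<Sum>i<N. norm (t i))"
        using member_le_sum[of n "{..<N}" "\<lambda>i. norm (t i)"] n by auto
      thus "n \<in> F J" using J unfolding F_def by simp
    qed
    hence "sum f {..<N} \<le> sum f (F J)" by (intro sum_mono2[OF finF]) (auto simp: f0)
    also have "\<dots> \<le> sum f (F 0) + K * 2 powr s / (1 - q)" by (rule bound)
    finally show "sum f {..<N} \<le> sum f (F 0) + K * 2 powr s / (1 - q)" .
  qed
qed

lemma term_bound:
  fixes z w a :: complex and p :: real and k :: nat
  assumes z1: "1 \<le> norm z" and w0: "w \<noteq> 0" and p: "0 \<le> p"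
    and far: "norm w < 2 * norm z \<Longrightarrow> norm w powr (-p) \<le> \<bar>norm z - norm w\<bar>"
  shows "norm (a / (w ^ k * (z - w))) \<le> (2 powr (1+p) + 2) * norm z powr (1+p) * (norm a / norm w ^ (k+1))"
proof -
  define T where "T = norm w"
  define Z where "Z = norm z"
  define S where "S = norm a / T ^ (k+1)"
  have T: "T > 0" using w0 unfolding T_def by simp
  have S0: "S \<ge> 0" unfolding S_def using T by simp
  have Zp: "Z powr (1+p) \<ge> 1" using z1 p unfolding Z_def by (simp add: ge_one_powr_ge_zero)
  have eq: "norm (a / (w ^ k * (z - w))) = norm a / (T ^ k * norm (z - w))"
    unfolding T_def by (simp add: norm_divide norm_mult norm_power)
  have key: "norm a / (T ^ k * norm (z - w)) \<le> max 2 (2 powr (1+p) * Z powr (1+p)) * S"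
  proof (cases "T < 2 * Z")
    case False
    have D: "T / 2 \<le> norm (z - w)"
      using norm_triangle_ineq2[of w z] False unfolding T_def Z_def by (simp add: norm_minus_commute)
    have "0 < norm (z - w)" using D T by linarith
    hence "norm a / (T ^ k * norm (z - w)) \<le> norm a / (T ^ k * (T / 2))"
      using T D by (intro divide_left_mono mult_left_mono) auto
    also have "\<dots> = 2 * S" unfolding S_def using T by (simp add: field_simps)
    also have "\<dots> \<le> max 2 (2 powr (1+p) * Z powr (1+p)) * S" using S0 by (intro mult_right_mono) auto
    finally show ?thesis .
  next
    case True
    have "T powr (-p) \<le> \<bar>Z - T\<bar>" using far True unfolding T_def Z_def by simp
    also have "\<bar>Z - T\<bar> \<le> norm (z - w)" unfolding Z_def T_def by (rule norm_triangle_ineq3)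
    finally have D: "T powr (-p) \<le> norm (z - w)" .
    have "norm a / (T ^ k * norm (z - w)) \<le> norm a / (T ^ k * T powr (-p))"
      using T D by (intro divide_left_mono mult_left_mono mult_pos_pos) auto
    also have "\<dots> = S * T powr (1+p)"
      unfolding S_def using T by (simp add: powr_add powr_minus field_simps)
    also have "\<dots> \<le> S * (2 * Z) powr (1+p)"
      using True T S0 p by (intro mult_left_mono powr_mono2) auto
    also have "\<dots> = 2 powr (1+p) * Z powr (1+p) * S"
      using z1 unfolding Z_def by (simp add: powr_mult)
    also have "\<dots> \<le> max 2 (2 powr (1+p) * Z powr (1+p)) * S" using S0 by (intro mult_right_mono) auto
    finally show ?thesis .
  qed
  also have "max 2 (2 powr (1+p) * Z powr (1+p)) \<le> (2 powr (1+p) + 2) * Z powr (1+p)"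
  proof -
    have "0 \<le> 2 powr (1+p) * Z powr (1+p)" by simp
    hence "0 \<le> 2 powr (1+p) * Z powr (1+p)" "2 \<le> 2 * Z powr (1+p)" using Zp by simp_all
    thus ?thesis unfolding distrib_right by (intro max.boundedI) linarith+
  qed
  hence "max 2 (2 powr (1+p) * Z powr (1+p)) * S \<le> (2 powr (1+p) + 2) * Z powr (1+p) * S"
    using S0 by (intro mult_right_mono) auto
  finally show ?thesis unfolding eq S_def T_def Z_def .
qed

lemma part1:
  fixes t :: "nat \<Rightarrow> complex" and A :: "complex \<Rightarrow> complex" and \<rho> \<epsilon> :: real
  assumes t_inj: "inj t"
    and t_nz: "\<And>n. t n \<noteq> 0"
    and t_inf: "filterlim (\<lambda>n. norm (t n)) at_top sequentially"
    and A_entire: "A holomorphic_on UNIV"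
    and A_order: "entire_order A = ereal \<rho>"
    and A_zeros: "{z. A z = 0} = range t"
    and eps: "\<epsilon> > 0"
  shows "\<exists>E. E \<subseteq> {0<..} \<and> open E \<and> E \<in> fmeasurable lborel \<and>
        (\<forall>(k::nat) (a::nat \<Rightarrow> complex) (f::complex \<Rightarrow> complex).
           summable (\<lambda>n. norm (a n) / norm (t n) ^ (k + 1)) \<and>
           f holomorphic_on UNIV \<and>
           (\<forall>z. z \<notin> range t \<longrightarrow> f z = A z * cauchy_transform t a k z)
           \<longrightarrow> (\<exists>C::real. \<forall>z. 1 \<le> norm z \<and> norm z \<notin> E \<longrightarrow>
                 norm (f z) \<le> C * norm z powr (\<rho> + real k + 1 + \<epsilon>) * norm (A z)))"
proof -
  have \<rho>0: "0 \<le> \<rho>" by (rule order_nonneg[OF A_order])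
  define p where "p = \<rho> + \<epsilon>"
  have p0: "0 \<le> p" using \<rho>0 eps unfolding p_def by simp
  obtain K where K: "\<forall>r\<ge>1. real (card {n. norm (t n) \<le> r}) \<le> K * r powr (\<rho> + \<epsilon>/2)"
    using count_bound[OF t_inj t_nz t_inf A_entire A_order A_zeros, of "\<rho> + \<epsilon>/2"] eps by auto
  define \<delta> where "\<delta> = (\<lambda>n. norm (t n) powr (-p))"
  have sd: "summable \<delta>" unfolding \<delta>_def
    by (rule summable_from_count[OF t_inf K]) (use \<rho>0 eps in \<open>auto simp: p_def\<close>)
  have d0: "\<delta> n > 0" for n unfolding \<delta>_def using t_nz by simp
  define I where "I = (\<lambda>n. {norm (t n) - \<delta> n <..< norm (t n) + \<delta> n})"
  define E where "E = {0<..} \<inter> (\<Union>n. I n)"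
  have opE: "open E" unfolding E_def I_def by (intro open_Int open_UN) auto
  have "emeasure lborel E \<le> emeasure lborel (\<Union>n. I n)"
    unfolding E_def by (intro emeasure_mono) (auto simp: I_def)
  also have "\<dots> \<le> (\<Sum>n. emeasure lborel (I n))"
    by (rule emeasure_subadditive_countably) (auto simp: I_def)
  also have "\<dots> = (\<Sum>n. ennreal (2 * \<delta> n))"
    using d0 by (simp add: I_def less_imp_le)
  also have "\<dots> = ennreal (\<Sum>n. 2 * \<delta> n)"
    using d0 sd by (intro suminf_ennreal_eq) (auto simp: less_imp_le intro!: summable_sums summable_mult)
  finally have "emeasure lborel E < \<infinity>" by (simp add: le_less_trans)
  hence fmE: "E \<in> fmeasurable lborel" using opE by (intro fmeasurableI) auto
  have Epos: "E \<subseteq> {0<..}" unfolding E_def by auto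
  show ?thesis
  proof (intro exI[of _ E] conjI Epos opE fmE allI impI)
    fix k :: nat and a :: "nat \<Rightarrow> complex" and f :: "complex \<Rightarrow> complex"
    assume H: "summable (\<lambda>n. norm (a n) / norm (t n) ^ (k + 1)) \<and> f holomorphic_on UNIV \<and>
           (\<forall>z. z \<notin> range t \<longrightarrow> f z = A z * cauchy_transform t a k z)"
    define S where "S = (\<lambda>n. norm (a n) / norm (t n) ^ (k + 1))"
    have sS: "summable S" using H unfolding S_def by simp
    define K' where "K' = 2 powr (1+p) + 2"
    have K'0: "K' \<ge> 0" unfolding K'_def by simp
    show "\<exists>C. \<forall>z. 1 \<le> norm z \<and> norm z \<notin> E \<longrightarrow>
                 norm (f z) \<le> C * norm z powr (\<rho> + real k + 1 + \<epsilon>) * norm (A z)"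
    proof (intro exI[of _ "K' * suminf S"] allI impI)
      fix z :: complex assume z: "1 \<le> norm z \<and> norm z \<notin> E"
      have far: "\<delta> n \<le> \<bar>norm z - norm (t n)\<bar>" for n
      proof (rule ccontr)
        assume "\<not> ?thesis"
        hence "norm z \<in> I n" unfolding I_def by auto
        thus False using z unfolding E_def by auto
      qed
      have znt: "z \<notin> range t"
      proof
        assume "z \<in> range t" then obtain n where "z = t n" by auto
        thus False using far[of n] d0[of n] by simp
      qed
      define g where "g = (\<lambda>n. a n / (t n ^ k * (z - t n)))"
      have gb: "norm (g n) \<le> K' * norm z powr (1+p) * S n" for n
        unfolding g_def K'_def S_def
        by (rule term_bound[OF _ t_nz p0]) (use z far in \<open>auto simp: \<delta>_def\<close>)
      have sg: "summable (\<lambda>n. norm (g n))"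
        by (rule summable_comparison_test[of _ "\<lambda>n. K' * norm z powr (1+p) * S n"])
           (use gb sS in \<open>auto intro!: summable_mult\<close>)
      have "norm (suminf g) \<le> (\<Sum>n. norm (g n))" by (rule summable_norm[OF sg])
      also have "\<dots> \<le> (\<Sum>n. K' * norm z powr (1+p) * S n)"
        by (rule suminf_le[OF gb sg]) (use sS in \<open>auto intro!: summable_mult\<close>)
      also have "\<dots> = K' * norm z powr (1+p) * suminf S"
        using sS by (simp add: suminf_mult)
      finally have gs: "norm (suminf g) \<le> K' * norm z powr (1+p) * suminf S" .
      have "norm (f z) = norm (A z) * (norm z ^ k * norm (suminf g))"
        using H znt unfolding cauchy_transform_def g_def by (simp add: norm_mult norm_power)
      also have "\<dots> \<le> norm (A z) * (norm z ^ k * (K' * norm z powr (1+p) * suminf S))"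
        using gs by (intro mult_left_mono) auto
      also have "norm z ^ k * (K' * norm z powr (1+p) * suminf S)
          = K' * suminf S * (norm z ^ k * norm z powr (1+p))" by (simp add: algebra_simps)
      also have "norm z ^ k * norm z powr (1+p) = norm z powr (\<rho> + real k + 1 + \<epsilon>)"
      proof -
        have "0 < norm z" using z by linarith
        hence "norm z ^ k = norm z powr real k" by (rule powr_realpow[symmetric])
        thus ?thesis by (simp add: powr_add[symmetric] p_def algebra_simps)
      qed
      finally show "norm (f z) \<le> K' * suminf S * norm z powr (\<rho> + real k + 1 + \<epsilon>) * norm (A z)"
        by (simp add: algebra_simps)
    qed
  qed
qed

lemma gap:
  assumes "E \<in> fmeasurable lborel" "measure lborel E < L"
  shows "\<exists>r'. r \<le> r' \<and> r' \<le> r + L \<and> r' \<notin> E"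
proof (rule ccontr)
  assume "\<not> ?thesis"
  hence "{r..r+L} \<subseteq> E" by auto
  hence "measure lborel {r..r+L} \<le> measure lborel E"
    using assms(1) by (intro measure_mono_fmeasurable) auto
  moreover have "0 \<le> measure lborel E" by simp
  ultimately show False using assms(2) by simp
qed

lemma maxmod:
  fixes g :: "complex \<Rightarrow> complex"
  assumes "g holomorphic_on UNIV" "0 < r'" "\<And>w. norm w = r' \<Longrightarrow> norm (g w) \<le> B" "norm z \<le> r'"
  shows "norm (g z) \<le> B"
proof (rule maximum_modulus_frontier[of g "cball 0 r'"])
  show "g holomorphic_on interior (cball 0 r')" using assms(1) by (rule holomorphic_on_subset) auto
  show "continuous_on (closure (cball 0 r')) g" using assms(1) holomorphic_on_imp_continuous_on
    by (metis continuous_on_subset top_greatest)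
qed (use assms in auto)

lemma powr_ev:
  assumes "0 < a" shows "eventually (\<lambda>r::real. X \<le> r powr a) at_top"
proof (rule eventually_at_top_linorderI[of "(\<bar>X\<bar> + 1) powr (1/a)"])
  fix r assume r: "(\<bar>X\<bar> + 1) powr (1/a) \<le> r"
  have "((\<bar>X\<bar> + 1) powr (1/a)) powr a \<le> r powr a" using assms r by (intro powr_mono2) auto
  also have "((\<bar>X\<bar> + 1) powr (1/a)) powr a = \<bar>X\<bar> + 1" using assms by (simp add: powr_powr)
  finally show "X \<le> r powr a" by simp
qed

lemma dom1:
  assumes "0 < a" "0 < e"
  shows "eventually (\<lambda>r::real. c * r powr (p - a) \<le> e/3 * r powr p) at_top"
proof -
  have "eventually (\<lambda>r::real. 3 * \<bar>c\<bar> / e \<le> r powr a \<and> 1 \<le> r) at_top"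
    using powr_ev[OF assms(1)] eventually_ge_at_top by (rule eventually_conj)
  thus ?thesis
  proof (rule eventually_mono)
    fix r :: real assume r: "3 * \<bar>c\<bar> / e \<le> r powr a \<and> 1 \<le> r"
    have "c * r powr (p - a) \<le> \<bar>c\<bar> * r powr (p - a)" by (intro mult_right_mono) auto
    also have "\<dots> = (3 * \<bar>c\<bar> / e) * (e/3) * r powr (p - a)" using assms by simp
    also have "\<dots> \<le> r powr a * (e/3) * r powr (p - a)"
      using r assms by (intro mult_right_mono) auto
    also have "\<dots> = e/3 * r powr p" using r by (simp add: powr_add[symmetric])
    finally show "c * r powr (p - a) \<le> e/3 * r powr p" .
  qed
qed

lemma dominate:
  assumes "0 < p" "0 \<le> q" "q < p" "0 < e"
  shows "eventually (\<lambda>r::real. c1 + c2 * ln r + c3 * r powr q \<le> e * r powr p) at_top"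
proof -
  have ev1: "eventually (\<lambda>r::real. c1 * r powr (p - p) \<le> e/3 * r powr p) at_top"
    by (rule dom1) (use assms in auto)
  have ev2: "eventually (\<lambda>r::real. (\<bar>c2\<bar> * (2/p)) * r powr (p - p/2) \<le> e/3 * r powr p) at_top"
    by (rule dom1) (use assms in auto)
  have ev3: "eventually (\<lambda>r::real. c3 * r powr (p - (p - q)) \<le> e/3 * r powr p) at_top"
    by (rule dom1) (use assms in auto)
  have "eventually (\<lambda>r::real. 1 \<le> r) at_top" by (rule eventually_ge_at_top)
  with ev1 ev2 ev3 show ?thesis
  proof eventually_elim
    case (elim r)
    have r0: "0 < r" using elim by simp
    have "c2 * ln r \<le> \<bar>c2\<bar> * ln r" using elim by (intro mult_right_mono) auto
    also have "\<dots> \<le> \<bar>c2\<bar> * (r powr (p/2) / (p/2))"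
      using elim assms by (intro mult_left_mono ln_powr_bound) auto
    also have "\<dots> = (\<bar>c2\<bar> * (2/p)) * r powr (p - p/2)" by simp
    finally have "c2 * ln r \<le> e/3 * r powr p" using elim by linarith
    moreover have "c1 \<le> e/3 * r powr p" using elim r0 by simp
    moreover have "c3 * r powr q \<le> e/3 * r powr p" using elim by simp
    ultimately show ?case by linarith
  qed
qed

lemma ereal_le_dense:
  assumes "\<And>s. \<rho> < s \<Longrightarrow> x \<le> ereal s"
  shows "x \<le> ereal \<rho>"
proof (rule ccontr)
  assume "\<not> x \<le> ereal \<rho>"
  hence "ereal \<rho> < x" by simp
  then obtain s where "ereal \<rho> < ereal s" "ereal s < x" using ereal_dense2 by blast
  thus False using assms[of s] by simp
qed

lemma transfer:
  fixes g A :: "complex \<Rightarrow> complex"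
  assumes hol: "g holomorphic_on UNIV" and fm: "E \<in> fmeasurable lborel" and C: "0 \<le> C"
    and bd: "\<forall>z. 1 \<le> norm z \<and> norm z \<notin> E \<longrightarrow> norm (g z) \<le> C * norm z powr q * norm (A z)"
  shows "\<exists>L>0. \<forall>r\<ge>1. \<exists>r'. r \<le> r' \<and> r' \<le> r + L \<and>
          (\<forall>B. (\<forall>w. norm w = r' \<longrightarrow> norm (A w) \<le> B) \<longrightarrow> (\<forall>z. norm z \<le> r \<longrightarrow> norm (g z) \<le> C * r' powr q * B))"
proof -
  define L where "L = measure lborel E + 1"
  have L0: "0 < L" unfolding L_def by (simp add: add_nonneg_pos)
  have main: "\<exists>r'. r \<le> r' \<and> r' \<le> r + L \<and>
          (\<forall>B. (\<forall>w. norm w = r' \<longrightarrow> norm (A w) \<le> B) \<longrightarrow> (\<forall>z. norm z \<le> r \<longrightarrow> norm (g z) \<le> C * r' powr q * B))"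
    if r: "1 \<le> r" for r :: real
  proof -
    obtain r' where r': "r \<le> r'" "r' \<le> r + L" "r' \<notin> E"
      using gap[OF fm, of L r] unfolding L_def by auto
    have "norm (g z) \<le> C * r' powr q * B"
      if B: "\<forall>w. norm w = r' \<longrightarrow> norm (A w) \<le> B" and z: "norm z \<le> r" for B and z :: complex
    proof (rule maxmod[OF hol])
      show "0 < r'" using r r' by simp
      show "norm z \<le> r'" using z r' by simp
      fix w :: complex assume w: "norm w = r'"
      have "norm (g w) \<le> C * norm w powr q * norm (A w)" using bd w r r' by auto
      also have "\<dots> \<le> C * norm w powr q * B" using B w C by (intro mult_left_mono) auto
      finally show "norm (g w) \<le> C * r' powr q * B" using w by simp
    qed
    thus ?thesis using r' by blast
  qed
  show ?thesis using L0 main by blast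
qed

lemma exp_form:
  fixes C x q y :: real
  assumes "0 < C" "0 < x"
  shows "C * x powr q * exp y = exp (ln C + q * ln x + y)"
proof -
  have "exp (ln C + q * ln x + y) = exp (ln C) * exp (q * ln x) * exp y" by (simp only: exp_add)
  thus ?thesis using assms by (simp add: powr_def)
qed

lemma order_part:
  fixes g A :: "complex \<Rightarrow> complex"
  assumes hol: "g holomorphic_on UNIV" and fm: "E \<in> fmeasurable lborel" and C: "0 < C" and q: "0 \<le> q"
    and bd: "\<forall>z. 1 \<le> norm z \<and> norm z \<notin> E \<longrightarrow> norm (g z) \<le> C * norm z powr q * norm (A z)"
    and A_order: "entire_order A = ereal \<rho>"
  shows "entire_order g \<le> ereal \<rho>"
proof (rule ereal_le_dense)
  fix s assume s: "\<rho> < s"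
  have \<rho>0: "0 \<le> \<rho>" by (rule order_nonneg[OF A_order])
  obtain L where L: "L > 0" and main: "\<forall>r\<ge>1. \<exists>r'. r \<le> r' \<and> r' \<le> r + L \<and>
          (\<forall>B. (\<forall>w. norm w = r' \<longrightarrow> norm (A w) \<le> B) \<longrightarrow> (\<forall>z. norm z \<le> r \<longrightarrow> norm (g z) \<le> C * r' powr q * B))"
    using transfer[OF hol fm _ bd] C by auto
  define s' where "s' = (\<rho> + s) / 2"
  have s': "\<rho> < s'" "s' < s" "0 \<le> s'" using s \<rho>0 unfolding s'_def by auto
  obtain RA where RA: "RA \<ge> 1" "\<forall>z. RA \<le> norm z \<longrightarrow> norm (A z) \<le> exp (norm z powr s')"
    using order_bound[OF A_order s'(1)] by blast
  have "eventually (\<lambda>r::real. (ln C + q * ln 2) + q * ln r + 2 powr s' * r powr s' \<le> 1 * r powr s) at_top"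
    by (rule dominate) (use s s' \<rho>0 in auto)
  then obtain R0 where R0: "\<And>r. r \<ge> R0 \<Longrightarrow> (ln C + q * ln 2) + q * ln r + 2 powr s' * r powr s' \<le> r powr s"
    unfolding eventually_at_top_linorder by auto
  have "s \<in> {s::real. 0 \<le> s \<and> (\<exists>R. \<forall>z. R \<le> norm z \<longrightarrow> norm (g z) \<le> exp (norm z powr s))}"
  proof (intro CollectI conjI exI allI impI)
    show "0 \<le> s" using s \<rho>0 by simp
    fix z :: complex assume z: "max (max R0 RA) (max L 1) \<le> norm z"
    define r where "r = norm z"
    have r: "r \<ge> 1" "r \<ge> R0" "r \<ge> RA" "r \<ge> L" using z unfolding r_def by auto
    obtain r' where r': "r \<le> r'" "r' \<le> r + L" and
      G: "\<forall>B. (\<forall>w. norm w = r' \<longrightarrow> norm (A w) \<le> B) \<longrightarrow> (\<forall>z. norm z \<le> r \<longrightarrow> norm (g z) \<le> C * r' powr q * B)"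
      using main r(1) by blast
    have "\<forall>w. norm w = r' \<longrightarrow> norm (A w) \<le> exp (r' powr s')" using RA r r' by auto
    hence g1: "norm (g z) \<le> C * r' powr q * exp (r' powr s')" using G r_def by auto
    have "r' powr s' \<le> (2*r) powr s'" using r r' s' by (intro powr_mono2) auto
    hence "C * r' powr q * exp (r' powr s') \<le> C * (2*r) powr q * exp ((2*r) powr s')"
      using r r' C q s' by (intro mult_mono mult_left_mono powr_mono2) auto
    with g1 have "norm (g z) \<le> C * (2*r) powr q * exp ((2*r) powr s')" by linarith
    also have "\<dots> = exp (ln C + q * ln (2*r) + (2*r) powr s')"
      using C r by (intro exp_form) auto
    also have "ln C + q * ln (2*r) + (2*r) powr s' = (ln C + q * ln 2) + q * ln r + 2 powr s' * r powr s'"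
      using r by (simp add: ln_mult powr_mult algebra_simps)
    also have "exp \<dots> \<le> exp (r powr s)" using R0 r by simp
    finally show "norm (g z) \<le> exp (norm z powr s)" unfolding r_def .
  qed
  thus "entire_order g \<le> ereal s" unfolding entire_order_def by (rule INF_lower)
qed

lemma type_zero_empty:
  fixes A :: "complex \<Rightarrow> complex"
  assumes hol: "A holomorphic_on UNIV" and A0: "A 0 \<noteq> 0" and \<zeta>: "A \<zeta> = 0"
  shows "{\<tau>::real. 0 \<le> \<tau> \<and> (\<exists>R. \<forall>z. R \<le> norm z \<longrightarrow> norm (A z) \<le> exp (\<tau> * norm z powr 0))} = {}"
proof (rule ccontr)
  assume "\<not> ?thesis"
  then obtain \<tau> R where R: "\<forall>z. R \<le> norm z \<longrightarrow> norm (A z) \<le> exp (\<tau> * norm z powr 0)" by auto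
  have "A \<zeta> = (\<Sum>k\<le>0. (deriv ^^ k) A 0 / fact k * \<zeta> ^ k)"
  proof (rule Liouville_polynomial[OF hol, of "max R 1" "exp \<tau>"])
    fix z :: complex assume z: "max R 1 \<le> norm z"
    hence "z \<noteq> 0" by auto
    thus "norm (A z) \<le> exp \<tau> * norm z ^ 0" using R z by auto
  qed
  hence "A \<zeta> = A 0" by simp
  thus False using A0 \<zeta> by simp
qed

lemma delta_choice:
  fixes \<rho> \<tau> \<tau>'' :: real
  assumes "0 < \<rho>" "0 \<le> \<tau>" "\<tau> < \<tau>''"
  shows "\<exists>\<delta>>0. \<tau> * (1 + \<delta>) powr \<rho> \<le> \<tau>''"
proof (cases "\<tau> = 0")
  case True thus ?thesis using assms by (intro exI[of _ 1]) auto
next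
  case False
  hence t: "0 < \<tau>" using assms by simp
  define c where "c = \<tau>'' / \<tau>"
  have c: "1 < c" unfolding c_def using t assms by simp
  have "c powr 0 < c powr (1/\<rho>)" using c assms by (intro powr_less_mono) auto
  hence c1: "1 < c powr (1/\<rho>)" using c by simp
  show ?thesis
  proof (intro exI[of _ "c powr (1/\<rho>) - 1"] conjI)
    show "0 < c powr (1/\<rho>) - 1" using c1 by simp
    have "(1 + (c powr (1/\<rho>) - 1)) powr \<rho> = c" using c assms by (simp add: powr_powr)
    thus "\<tau> * (1 + (c powr (1/\<rho>) - 1)) powr \<rho> \<le> \<tau>''" unfolding c_def using t by simp
  qed
qed

lemma type_part:
  fixes g A :: "complex \<Rightarrow> complex"
  assumes hol: "g holomorphic_on UNIV" and fm: "E \<in> fmeasurable lborel" and C: "0 < C" and q: "0 \<le> q"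
    and bd: "\<forall>z. 1 \<le> norm z \<and> norm z \<notin> E \<longrightarrow> norm (g z) \<le> C * norm z powr q * norm (A z)"
    and holA: "A holomorphic_on UNIV" and A0: "A 0 \<noteq> 0" and \<zeta>: "A \<zeta> = 0" and \<rho>0: "0 \<le> \<rho>"
  shows "entire_type \<rho> g \<le> entire_type \<rho> A"
proof (cases "\<rho> = 0")
  case True
  have e: "{\<tau>::real. 0 \<le> \<tau> \<and> (\<exists>R. \<forall>z. R \<le> norm z \<longrightarrow> norm (A z) \<le> exp (\<tau> * norm z powr 0))} = {}"
    by (rule type_zero_empty[OF holA A0 \<zeta>])
  show ?thesis unfolding entire_type_def True e by simp
next
  case False
  hence \<rho>p: "0 < \<rho>" using \<rho>0 by simp
  obtain L where L: "L > 0" and main: "\<forall>r\<ge>1. \<exists>r'. r \<le> r' \<and> r' \<le> r + L \<and>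
          (\<forall>B. (\<forall>w. norm w = r' \<longrightarrow> norm (A w) \<le> B) \<longrightarrow> (\<forall>z. norm z \<le> r \<longrightarrow> norm (g z) \<le> C * r' powr q * B))"
    using transfer[OF hol fm _ bd] C by auto
  show ?thesis unfolding entire_type_def
  proof (rule INF_greatest)
    fix \<tau> assume "\<tau> \<in> {\<tau>::real. 0 \<le> \<tau> \<and> (\<exists>R. \<forall>z. R \<le> norm z \<longrightarrow> norm (A z) \<le> exp (\<tau> * norm z powr \<rho>))}"
    then obtain RA where t0: "0 \<le> \<tau>" and RA: "\<forall>z. RA \<le> norm z \<longrightarrow> norm (A z) \<le> exp (\<tau> * norm z powr \<rho>)"
      by auto
    show "(INF \<tau>\<in>{\<tau>::real. 0 \<le> \<tau> \<and> (\<exists>R. \<forall>z. R \<le> norm z \<longrightarrow> norm (g z) \<le> exp (\<tau> * norm z powr \<rho>))}. ereal \<tau>) \<le> ereal \<tau>"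
    proof (rule ereal_le_dense)
      fix \<tau>' assume tt: "\<tau> < \<tau>'"
      define \<tau>'' where "\<tau>'' = (\<tau> + \<tau>') / 2"
      have t'': "\<tau> < \<tau>''" "\<tau>'' < \<tau>'" using tt unfolding \<tau>''_def by auto
      obtain \<delta> where \<delta>: "\<delta> > 0" "\<tau> * (1 + \<delta>) powr \<rho> \<le> \<tau>''"
        using delta_choice[OF \<rho>p t0 t''(1)] by blast
      have "eventually (\<lambda>r::real. (ln C + q * ln (1+\<delta>)) + q * ln r + 0 * r powr 0 \<le> (\<tau>' - \<tau>'') * r powr \<rho>) at_top"
        by (rule dominate) (use \<rho>p t'' in auto)
      then obtain R0 where R0: "\<And>r. r \<ge> R0 \<Longrightarrow> (ln C + q * ln (1+\<delta>)) + q * ln r \<le> (\<tau>' - \<tau>'') * r powr \<rho>"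
        unfolding eventually_at_top_linorder by auto
      have "\<tau>' \<in> {\<tau>::real. 0 \<le> \<tau> \<and> (\<exists>R. \<forall>z. R \<le> norm z \<longrightarrow> norm (g z) \<le> exp (\<tau> * norm z powr \<rho>))}"
      proof (intro CollectI conjI exI allI impI)
        show "0 \<le> \<tau>'" using t0 tt by simp
        fix z :: complex assume z: "max (max R0 RA) (max (L/\<delta>) 1) \<le> norm z"
        define r where "r = norm z"
        have r: "r \<ge> 1" "r \<ge> R0" "r \<ge> RA" "r \<ge> L/\<delta>" using z unfolding r_def by auto
        have Ld: "L \<le> \<delta> * r" using r(4) \<delta>(1) by (simp add: field_simps)
        obtain r' where r': "r \<le> r'" "r' \<le> r + L" and
          G: "\<forall>B. (\<forall>w. norm w = r' \<longrightarrow> norm (A w) \<le> B) \<longrightarrow> (\<forall>z. norm z \<le> r \<longrightarrow> norm (g z) \<le> C * r' powr q * B)"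
          using main r(1) by blast
        have r'd: "r' \<le> (1+\<delta>) * r" using r' Ld by (simp add: algebra_simps)
        have "\<forall>w. norm w = r' \<longrightarrow> norm (A w) \<le> exp (\<tau> * r' powr \<rho>)" using RA r r' by auto
        hence g1: "norm (g z) \<le> C * r' powr q * exp (\<tau> * r' powr \<rho>)" using G r_def by auto
        have p1: "r' powr q \<le> ((1+\<delta>) * r) powr q" using r r' r'd q by (intro powr_mono2) auto
        have "r' powr \<rho> \<le> ((1+\<delta>) * r) powr \<rho>" using r r' r'd \<rho>0 by (intro powr_mono2) auto
        also have "\<dots> = (1+\<delta>) powr \<rho> * r powr \<rho>" using \<delta> r by (simp add: powr_mult)
        finally have "\<tau> * r' powr \<rho> \<le> \<tau> * ((1+\<delta>) powr \<rho> * r powr \<rho>)" using t0 by (intro mult_left_mono)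
        also have "\<dots> = (\<tau> * (1+\<delta>) powr \<rho>) * r powr \<rho>" by simp
        also have "\<dots> \<le> \<tau>'' * r powr \<rho>" using \<delta>(2) by (intro mult_right_mono) auto
        finally have p2: "\<tau> * r' powr \<rho> \<le> \<tau>'' * r powr \<rho>" .
        have "C * r' powr q * exp (\<tau> * r' powr \<rho>) \<le> C * ((1+\<delta>) * r) powr q * exp (\<tau>'' * r powr \<rho>)"
          using p1 p2 C by (intro mult_mono mult_left_mono) auto
        with g1 have "norm (g z) \<le> C * ((1+\<delta>) * r) powr q * exp (\<tau>'' * r powr \<rho>)" by linarith
        also have "\<dots> = exp (ln C + q * ln ((1+\<delta>) * r) + \<tau>'' * r powr \<rho>)"
          using C r \<delta> by (intro exp_form) auto
        also have "ln C + q * ln ((1+\<delta>) * r) + \<tau>'' * r powr \<rho> = ((ln C + q * ln (1+\<delta>)) + q * ln r) + \<tau>'' * r powr \<rho>"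
        proof -
          have "ln ((1+\<delta>) * r) = ln (1+\<delta>) + ln r" using r \<delta> by (intro ln_mult_pos) auto
          thus ?thesis by (simp add: algebra_simps)
        qed
        also have "exp \<dots> \<le> exp (\<tau>' * r powr \<rho>)" using R0[of r] r by (simp add: algebra_simps)
        finally show "norm (g z) \<le> exp (\<tau>' * norm z powr \<rho>)" unfolding r_def .
      qed
      thus "(INF \<tau>\<in>{\<tau>::real. 0 \<le> \<tau> \<and> (\<exists>R. \<forall>z. R \<le> norm z \<longrightarrow> norm (g z) \<le> exp (\<tau> * norm z powr \<rho>))}. ereal \<tau>) \<le> ereal \<tau>'"
        by (rule INF_lower)
    qed
  qed
qed

lemma part2:
  fixes t :: "nat \<Rightarrow> complex" and A :: "complex \<Rightarrow> complex" and \<rho> :: real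
    and \<mu> :: "nat \<Rightarrow> real" and g :: "complex \<Rightarrow> complex"
  assumes t_inj: "inj t"
    and t_nz: "\<And>n. t n \<noteq> 0"
    and t_inf: "filterlim (\<lambda>n. norm (t n)) at_top sequentially"
    and A_entire: "A holomorphic_on UNIV"
    and A_order: "entire_order A = ereal \<rho>"
    and A_zeros: "{z. A z = 0} = range t"
    and H: "(\<forall>n. 0 < \<mu> n) \<and> summable (\<lambda>n. \<mu> n / ((norm (t n))\<^sup>2 + 1)) \<and> (\<forall>n. deriv A (t n) \<noteq> 0)"
    and gH: "g \<in> cdb_space t A \<mu>"
  shows "entire_order g \<le> ereal \<rho> \<and> entire_type \<rho> g \<le> entire_type \<rho> A"
proof -
  have \<rho>0: "0 \<le> \<rho>" by (rule order_nonneg[OF A_order])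
  obtain a where hol: "g holomorphic_on UNIV" and a2: "summable (\<lambda>n. (norm (a n))\<^sup>2)" and
    geq: "\<forall>z. z \<notin> range t \<longrightarrow> g z = A z * (\<Sum>n. a n * complex_of_real (sqrt (\<mu> n)) / (z - t n))"
    using gH unfolding cdb_space_def by blast
  define b where "b = (\<lambda>n. a n * complex_of_real (sqrt (\<mu> n)))"
  obtain N where N: "\<And>n. n \<ge> N \<Longrightarrow> 1 \<le> norm (t n)"
    using t_inf unfolding filterlim_at_top eventually_sequentially by blast
  have sb: "summable (\<lambda>n. norm (b n) / norm (t n) ^ (0 + 1))"
  proof (rule summable_comparison_test'[of "\<lambda>n. ((norm (a n))\<^sup>2 + 2 * (\<mu> n / ((norm (t n))\<^sup>2 + 1))) / 2" N])
    show "summable (\<lambda>n. ((norm (a n))\<^sup>2 + 2 * (\<mu> n / ((norm (t n))\<^sup>2 + 1))) / 2)"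
      using a2 H by (intro summable_divide summable_add summable_mult) auto
    fix n assume n: "N \<le> n"
    define x where "x = norm (a n)"
    define y where "y = sqrt (\<mu> n) / norm (t n)"
    have T: "1 \<le> norm (t n)" using N n by simp
    have mu: "0 < \<mu> n" using H by simp
    have "norm (norm (b n) / norm (t n) ^ (0 + 1)) = x * y"
      unfolding b_def x_def y_def using mu by (simp add: norm_mult)
    also have "\<dots> \<le> (x\<^sup>2 + y\<^sup>2) / 2" using sum_squares_bound[of x y] by simp
    also have "y\<^sup>2 = \<mu> n / (norm (t n))\<^sup>2" unfolding y_def using mu by (simp add: power_divide)
    also have "\<mu> n / (norm (t n))\<^sup>2 \<le> 2 * (\<mu> n / ((norm (t n))\<^sup>2 + 1))"
    proof -
      have "(norm (t n))\<^sup>2 + 1 \<le> 2 * (norm (t n))\<^sup>2" using one_le_power[OF T, of 2] by simp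
      hence "(2 * \<mu> n) / (2 * (norm (t n))\<^sup>2) \<le> (2 * \<mu> n) / ((norm (t n))\<^sup>2 + 1)"
        using mu T by (intro divide_left_mono) (auto intro!: mult_pos_pos add_pos_pos)
      thus ?thesis by simp
    qed
    finally show "norm (norm (b n) / norm (t n) ^ (0 + 1)) \<le> ((norm (a n))\<^sup>2 + 2 * (\<mu> n / ((norm (t n))\<^sup>2 + 1))) / 2"
      unfolding x_def by simp
  qed
  have geq': "\<forall>z. z \<notin> range t \<longrightarrow> g z = A z * cauchy_transform t b 0 z"
    using geq unfolding cauchy_transform_def b_def by simp
  from part1[OF t_inj t_nz t_inf A_entire A_order A_zeros zero_less_one]
  obtain E where EE: "E \<subseteq> {0<..} \<and> open E \<and> E \<in> fmeasurable lborel \<and> (\<forall>(k::nat) (a::nat \<Rightarrow> complex) (f::complex \<Rightarrow> complex).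
           summable (\<lambda>n. norm (a n) / norm (t n) ^ (k + 1)) \<and>
           f holomorphic_on UNIV \<and>
           (\<forall>z. z \<notin> range t \<longrightarrow> f z = A z * cauchy_transform t a k z)
           \<longrightarrow> (\<exists>C::real. \<forall>z. 1 \<le> norm z \<and> norm z \<notin> E \<longrightarrow>
                 norm (f z) \<le> C * norm z powr (\<rho> + real k + 1 + 1) * norm (A z)))" ..
  note E = EE[THEN conjunct1] EE[THEN conjunct2, THEN conjunct1] EE[THEN conjunct2, THEN conjunct2, THEN conjunct1]
  note bd = EE[THEN conjunct2, THEN conjunct2, THEN conjunct2]
  obtain C where C: "\<forall>z. 1 \<le> norm z \<and> norm z \<notin> E \<longrightarrow>
                 norm (g z) \<le> C * norm z powr (\<rho> + real (0::nat) + 1 + 1) * norm (A z)"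
    using bd[rule_format, OF conjI[OF sb conjI[OF hol geq']]] by blast
  define C' where "C' = max C 0 + 1"
  have C'0: "0 < C'" unfolding C'_def by simp
  have bd': "\<forall>z. 1 \<le> norm z \<and> norm z \<notin> E \<longrightarrow> norm (g z) \<le> C' * norm z powr (\<rho> + 2) * norm (A z)"
  proof (intro allI impI)
    fix z :: complex assume z: "1 \<le> norm z \<and> norm z \<notin> E"
    have "norm (g z) \<le> C * norm z powr (\<rho> + 2) * norm (A z)" using C z by (simp add: add.commute)
    also have "\<dots> \<le> C' * norm z powr (\<rho> + 2) * norm (A z)"
      unfolding C'_def by (intro mult_right_mono) auto
    finally show "norm (g z) \<le> C' * norm z powr (\<rho> + 2) * norm (A z)" .
  qed
  have A0: "A 0 \<noteq> 0" using A_zeros t_nz by (metis (mono_tags, lifting) mem_Collect_eq rangeE)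
  have At: "A (t 0) = 0" using A_zeros by auto
  show "entire_order g \<le> ereal \<rho> \<and> entire_type \<rho> g \<le> entire_type \<rho> A"
  proof
    show "entire_order g \<le> ereal \<rho>"
      by (rule order_part[OF hol E(3) C'0 _ bd' A_order]) (use \<rho>0 in simp)
    show "entire_type \<rho> g \<le> entire_type \<rho> A"
      by (rule type_part[OF hol E(3) C'0 _ bd' A_entire A0 At \<rho>0]) (use \<rho>0 in simp)
  qed
qed

theorem lemma2p5:
  fixes t :: "nat \<Rightarrow> complex" and A :: "complex \<Rightarrow> complex" and \<rho> :: real
  assumes t_inj: "inj t"
    and t_nz: "\<And>n. t n \<noteq> 0"
    and t_inf: "filterlim (\<lambda>n. norm (t n)) at_top sequentially"
    and A_entire: "A holomorphic_on UNIV"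
    and A_order: "entire_order A = ereal \<rho>"
    and A_zeros: "{z. A z = 0} = range t"
  shows
    "(\<forall>\<epsilon>>0. \<exists>E::real set. E \<subseteq> {0<..} \<and> E \<in> sets lebesgue \<and>
        ((\<lambda>R. measure lebesgue (E \<inter> {0<..<R}) / R) \<longlongrightarrow> 0) at_top \<and>
        (\<forall>(k::nat) (a::nat \<Rightarrow> complex) (f::complex \<Rightarrow> complex).
           summable (\<lambda>n. norm (a n) / norm (t n) ^ (k + 1)) \<and>
           f holomorphic_on UNIV \<and>
           (\<forall>z. z \<notin> range t \<longrightarrow> f z = A z * cauchy_transform t a k z)
           \<longrightarrow> (\<exists>C::real. \<forall>z. 1 \<le> norm z \<and> norm z \<notin> E \<longrightarrow>
                 norm (f z) \<le> C * norm z powr (\<rho> + real k + 1 + \<epsilon>) * norm (A z))))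
     \<and>
     (\<forall>\<mu>::nat \<Rightarrow> real.
        (\<forall>n. 0 < \<mu> n) \<and> summable (\<lambda>n. \<mu> n / ((norm (t n))\<^sup>2 + 1)) \<and>
        (\<forall>n. deriv A (t n) \<noteq> 0)
        \<longrightarrow> (\<forall>g \<in> cdb_space t A \<mu>.
               entire_order g \<le> ereal \<rho> \<and> entire_type \<rho> g \<le> entire_type \<rho> A))"
proof (intro conjI allI impI ballI)
  fix \<epsilon> :: real assume eps: "0 < \<epsilon>"
  from part1[OF t_inj t_nz t_inf A_entire A_order A_zeros eps]
  obtain E where EE: "E \<subseteq> {0<..} \<and> open E \<and> E \<in> fmeasurable lborel \<and> (\<forall>(k::nat) (a::nat \<Rightarrow> complex) (f::complex \<Rightarrow> complex).
           summable (\<lambda>n. norm (a n) / norm (t n) ^ (k + 1)) \<and>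
           f holomorphic_on UNIV \<and>
           (\<forall>z. z \<notin> range t \<longrightarrow> f z = A z * cauchy_transform t a k z)
           \<longrightarrow> (\<exists>C::real. \<forall>z. 1 \<le> norm z \<and> norm z \<notin> E \<longrightarrow>
                 norm (f z) \<le> C * norm z powr (\<rho> + real k + 1 + \<epsilon>) * norm (A z)))" ..
  note E = EE[THEN conjunct1] EE[THEN conjunct2, THEN conjunct1] EE[THEN conjunct2, THEN conjunct2, THEN conjunct1]
  note bd = EE[THEN conjunct2, THEN conjunct2, THEN conjunct2]
  have Eb: "E \<in> sets lborel" using borel_open[OF E(2)] by simp
  have Eleb: "E \<in> sets lebesgue" using Eb by simp
  define m where "m = measure lborel E"
  have lim: "((\<lambda>R::real. m * inverse R) \<longlongrightarrow> m * 0) at_top"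
    by (intro tendsto_mult tendsto_const tendsto_inverse_0_at_top filterlim_ident)
  have dens: "((\<lambda>R. measure lebesgue (E \<inter> {0<..<R}) / R) \<longlongrightarrow> 0) at_top"
  proof (rule tendsto_sandwich[of "\<lambda>_. 0" _ _ "\<lambda>R. m * inverse R"])
    have hR: "measure lebesgue (E \<inter> {0<..<R}) / R \<le> m * inverse R" if R: "R > 0" for R :: real
    proof -
      have "measure lebesgue (E \<inter> {0<..<R}) = measure lborel (E \<inter> {0<..<R})"
        using Eb by (intro measure_completion) auto
      also have "\<dots> \<le> m" unfolding m_def
        using Eb E(3) by (intro measure_mono_fmeasurable) auto
      finally show ?thesis using R by (simp add: divide_inverse mult_right_mono)
    qed
    show "eventually (\<lambda>R. measure lebesgue (E \<inter> {0<..<R}) / R \<le> m * inverse R) at_top"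
      by (rule eventually_mono[OF eventually_gt_at_top[of "0::real"]]) (rule hR)
    show "eventually (\<lambda>R. 0 \<le> measure lebesgue (E \<inter> {0<..<R}) / R) at_top"
      by (rule eventually_mono[OF eventually_gt_at_top[of "0::real"]]) simp
    show "((\<lambda>_. 0) \<longlongrightarrow> (0::real)) at_top" by simp
    show "((\<lambda>R. m * inverse R) \<longlongrightarrow> 0) at_top" using lim by simp
  qed
  show "\<exists>E::real set. E \<subseteq> {0<..} \<and> E \<in> sets lebesgue \<and>
        ((\<lambda>R. measure lebesgue (E \<inter> {0<..<R}) / R) \<longlongrightarrow> 0) at_top \<and>
        (\<forall>(k::nat) (a::nat \<Rightarrow> complex) (f::complex \<Rightarrow> complex).
           summable (\<lambda>n. norm (a n) / norm (t n) ^ (k + 1)) \<and>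
           f holomorphic_on UNIV \<and>
           (\<forall>z. z \<notin> range t \<longrightarrow> f z = A z * cauchy_transform t a k z)
           \<longrightarrow> (\<exists>C::real. \<forall>z. 1 \<le> norm z \<and> norm z \<notin> E \<longrightarrow>
                 norm (f z) \<le> C * norm z powr (\<rho> + real k + 1 + \<epsilon>) * norm (A z)))"
    by (intro exI[of _ E] conjI E(1) Eleb dens bd)
next
  fix \<mu> :: "nat \<Rightarrow> real" and g :: "complex \<Rightarrow> complex"
  assume H: "(\<forall>n. 0 < \<mu> n) \<and> summable (\<lambda>n. \<mu> n / ((norm (t n))\<^sup>2 + 1)) \<and> (\<forall>n. deriv A (t n) \<noteq> 0)"
    and gH: "g \<in> cdb_space t A \<mu>"
  show "entire_order g \<le> ereal \<rho>"
    using part2[OF t_inj t_nz t_inf A_entire A_order A_zeros H gH] by (rule conjunct1)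
next
  fix \<mu> :: "nat \<Rightarrow> real" and g :: "complex \<Rightarrow> complex"
  assume H: "(\<forall>n. 0 < \<mu> n) \<and> summable (\<lambda>n. \<mu> n / ((norm (t n))\<^sup>2 + 1)) \<and> (\<forall>n. deriv A (t n) \<noteq> 0)"
    and gH: "g \<in> cdb_space t A \<mu>"
  show "entire_type \<rho> g \<le> entire_type \<rho> A"
    using part2[OF t_inj t_nz t_inf A_entire A_order A_zeros H gH] by (rule conjunct2)
qed

end
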